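(* Let $F$ be a Ferrers diagram of semiperimeter $n+1$ and $T\in\mathsf{EWtab}(F)$. For $j\in[1,n]$ let $\nu_j(T)$ be the number of non-cornersupport $0$s in the row labeled $j$ of $T$ if $j\in\mathsf{rows}(F)$, and the number of non-cornersupport $1$s in the column labeled $j$ of $T$ if $j\in\mathsf{cols}(F)$. Then $\nu_j(T)=\mu_j(\phi_{TC}(T))$ for all $j\in[1,n]$.
   Context: Ferrers diagrams and graphs: a Ferrers diagram $F$ (English convention) of semiperimeter $n+1$ has rows and columns labeled by $0,\ldots,n$: the $n+1$ unit steps of its south-east boundary path, traversed from top-right to bottom-left, are labeled $0,\ldots,n$; a vertical step labels the row it bounds, a horizontal step the column it bounds (top row labeled $0$). $\mathsf{rows}(F)$, $\mathsf{cols}(F)$ are the label sets; $F$ has a cell in row $i$, column $j$ iff $i<j$. $G(F)$ has vertex set $\{0,\ldots,n\}$ with edges $\{i,j\}$ for $i\in\mathsf{rows}(F)$, $j\in\mathsf{cols}(F)$, $i<j$. Sandpile model on $G(F)$ with sink $0$: configurations $c\in\mathbb{N}^n$; non-sink $v$ unstable if $c_v\ge\deg(v)$; toppling sends one grain to each neighbour (grains to $0$ disappear); toppling the sink adds one grain to each neighbour of $0$. Recurrent: stable configurations obtainable from $c_v=\deg(v)-1$ by adding grains and stabilizing; $\mathsf{Rec}^{\mathsf{min}}(G)$: recurrent configurations of minimal total grain count. Canonical toppling of a recurrent $c$: topple the sink ($U^{(0)}_c=\{0\}$), then alternately topple simultaneously all unstable vertices in $\mathsf{cols}(F)$ ($V^{(1)}_c$),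 all unstable in $\mathsf{rows}(F)$ ($U^{(1)}_c$), etc.; $\mathsf{CanonTop}(c)=(U^{(0)}_c,V^{(1)}_c,U^{(1)}_c,\ldots)$ is an ordered partition of $\{0,\ldots,n\}$. For $c\in\mathsf{Rec}^{\mathsf{min}}(G(F))$ and $j\in[1,n]$: $\mu_j(c)=|\{k\in V^{(\ell)}_c: k>j\}|$ if $j\in U^{(\ell)}_c$, and $\mu_j(c)=|\{k\in U^{(\ell-1)}_c: k<j\}|$ if $j\in V^{(\ell)}_c$. EW-tableaux: $0/1$-fillings $T$ of $F$ ($T_{ij}$ = entry in row $i$, column $j$) with top row all 1s, a 0 in every other row, and no rectangle with 0s in two diagonally opposite corners and 1s in the other two; $\mathsf{EWtab}(F)$ is their set. $\phi_{TC}(T)$ is the configuration with $c_i$ = number of 1s in row $i$ ($i\in\mathsf{rows}(F)$), $c_i$ = number of 0s in column $i$ ($i\in\mathsf{cols}(F)$); it lies in $\mathsf{Rec}^{\mathsf{min}}(G(F))$. $\mathsf{CanonTop}(T):=\mathsf{CanonTop}(\phi_{TC}(T))$. Supplementary tableau $S=S(T)$: the $|\mathsf{rows}(F)|\times|\mathsf{cols}(F)|$ array with $S_{ij}=1$ if row label $i$ lies in an earlier block of $\mathsf{CanonTop}(T)$ than column label $j$, else $0$ (agrees with $T$ on cells of $F$). An entry $x$ of $T$ at $(j,k)$ is a cornersupport entry iff there exist a row $j'\ne j$ and column $k'\ne k$ with $S_{j'k'}\ne x$ and $S_{j'k}=S_{jk'}=x$. *)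

theory Defs
  imports Main
begin

text \<open>A Ferrers diagram of semiperimeter n+1 is encoded by the set R of labels of
  its rows (vertical boundary steps); the remaining labels in {0..n} are columns.
  The top row is labelled 0, and the last boundary step n is horizontal (the
  leftmost column), i.e. no row or column is empty.\<close>

definition ferrers :: "nat \<Rightarrow> nat set \<Rightarrow> bool" where
  "ferrers n R \<longleftrightarrow> R \<subseteq> {0..n} \<and> 0 \<in> R \<and> n \<notin> R"

definition cols :: "nat \<Rightarrow> nat set \<Rightarrow> nat set" where
  "cols n R = {0..n} - R"

definition cell :: "nat \<Rightarrow> nat set \<Rightarrow> nat \<Rightarrow> nat \<Rightarrow> bool" where
  "cell n R i j \<longleftrightarrow> i \<in> R \<and> j \<in> cols n R \<and> i < j"

definition adjF :: "nat \<Rightarrow> nat set \<Rightarrow> nat \<Rightarrow> nat \<Rightarrow> bool" where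
  "adjF n R u v \<longleftrightarrow> cell n R u v \<or> cell n R v u"

definition degF :: "nat \<Rightarrow> nat set \<Rightarrow> nat \<Rightarrow> nat" where
  "degF n R v = card {u \<in> {0..n}. adjF n R u v}"

text \<open>Tableaux: T i j is the entry in row i, column j (True = 1, False = 0);
  only entries at cells of F are meaningful.\<close>
definition EWtab :: "nat \<Rightarrow> nat set \<Rightarrow> (nat \<Rightarrow> nat \<Rightarrow> bool) set" where
  "EWtab n R = {T.
     (\<forall>j. cell n R 0 j \<longrightarrow> T 0 j) \<and>
     (\<forall>i\<in>R. i \<noteq> 0 \<longrightarrow> (\<exists>j. cell n R i j \<and> \<not> T i j)) \<and>
     (\<forall>i i' j j'. cell n R i j \<and> cell n R i j' \<and> cell n R i' j \<and> cell n R i' j'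
        \<longrightarrow> \<not> (\<not> T i j \<and> \<not> T i' j' \<and> T i j' \<and> T i' j)
          \<and> \<not> (T i j \<and> T i' j' \<and> \<not> T i j' \<and> \<not> T i' j))}"

text \<open>The configuration phi_TC(T) (values at vertex 0 are irrelevant).\<close>
definition phiTC :: "nat \<Rightarrow> nat set \<Rightarrow> (nat \<Rightarrow> nat \<Rightarrow> bool) \<Rightarrow> nat \<Rightarrow> nat" where
  "phiTC n R T v =
     (if v \<in> R then card {k. cell n R v k \<and> T v k}
      else card {i. cell n R i v \<and> \<not> T i v})"

text \<open>Phase 0 topples the sink; phase 2l-1 topples
  simultaneously all unstable vertices in cols(F) (the block V^(l)); phase 2l
  topples simultaneously all unstable non-sink vertices in rows(F) (the block
  U^(l)).\<close>
primrec canon_stage :: "nat \<Rightarrow> nat set \<Rightarrow> (nat \<Rightarrow> nat) \<Rightarrow> nat \<Rightarrow> (nat \<Rightarrow> nat) \<times> nat set" where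
  "canon_stage n R c 0 = ((\<lambda>v. c v + (if adjF n R 0 v then 1 else 0)), {0})"
| "canon_stage n R c (Suc m) =
     (let d = fst (canon_stage n R c m);
          U = {v \<in> (if odd (Suc m) then cols n R else R - {0}). degF n R v \<le> d v}
      in ((\<lambda>v. d v - (if v \<in> U then degF n R v else 0) + card {u \<in> U. adjF n R u v}), U))"

definition canon_block :: "nat \<Rightarrow> nat set \<Rightarrow> (nat \<Rightarrow> nat) \<Rightarrow> nat \<Rightarrow> nat set" where
  "canon_block n R c m = snd (canon_stage n R c m)"

definition block_idx :: "nat \<Rightarrow> nat set \<Rightarrow> (nat \<Rightarrow> nat) \<Rightarrow> nat \<Rightarrow> nat" where
  "block_idx n R c v = (LEAST m. v \<in> canon_block n R c m)"

definition mu :: "nat \<Rightarrow> nat set \<Rightarrow> (nat \<Rightarrow> nat) \<Rightarrow> nat \<Rightarrow> nat" where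
  "mu n R c j =
     (let m = block_idx n R c j in
      if even m then card {k \<in> canon_block n R c (m - 1). k > j}
      else card {k \<in> canon_block n R c (m - 1). k < j})"

definition suppl :: "nat \<Rightarrow> nat set \<Rightarrow> (nat \<Rightarrow> nat \<Rightarrow> bool) \<Rightarrow> nat \<Rightarrow> nat \<Rightarrow> bool" where
  "suppl n R T i j \<longleftrightarrow> block_idx n R (phiTC n R T) i < block_idx n R (phiTC n R T) j"

definition cornersupport :: "nat \<Rightarrow> nat set \<Rightarrow> (nat \<Rightarrow> nat \<Rightarrow> bool) \<Rightarrow> nat \<Rightarrow> nat \<Rightarrow> bool" where
  "cornersupport n R T j k \<longleftrightarrow>
     (let x = T j k; S = suppl n R T in
      \<exists>j'\<in>R. \<exists>k'\<in>cols n R. j' \<noteq> j \<and> k' \<noteq> k \<and> S j' k' \<noteq> x \<and> S j' k = x \<and> S j k' = x)"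

definition nu :: "nat \<Rightarrow> nat set \<Rightarrow> (nat \<Rightarrow> nat \<Rightarrow> bool) \<Rightarrow> nat \<Rightarrow> nat" where
  "nu n R T j =
     (if j \<in> R then card {k. cell n R j k \<and> \<not> T j k \<and> \<not> cornersupport n R T j k}
      else card {i. cell n R i j \<and> T i j \<and> \<not> cornersupport n R T i j})"

end

theory Submission
  imports Defs
begin

lemma card_sub_iff: "finite X \<Longrightarrow> Y \<subseteq> X \<Longrightarrow> (card X \<le> card Y \<longleftrightarrow> X \<subseteq> Y)"
proof
  assume "finite X" "Y \<subseteq> X" "card X \<le> card Y"
  then show "X \<subseteq> Y" using card_seteq by blast
next
  assume "finite X" "Y \<subseteq> X" "X \<subseteq> Y"
  then show "card X \<le> card Y" by auto
qed

lemma fin_le: "(\<And>x. Q x \<Longrightarrow> x \<le> (n::nat)) \<Longrightarrow> finite {x. Q x}"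
  by (rule finite_subset[of _ "{0..n}"]) auto

lemma fin_sub: "A \<subseteq> {0..(n::nat)} \<Longrightarrow> finite {u \<in> A. Q u}"
  by (rule finite_subset[of _ "{0..n}"]) auto

lemma par_gap: "even (a::nat) = odd b \<Longrightarrow> a < b \<Longrightarrow> b \<noteq> Suc a \<Longrightarrow> a + 3 \<le> b"
  by presburger
lemma h_two: "\<not> (b::nat) < k \<Longrightarrow> odd k \<Longrightarrow> b = 2 \<Longrightarrow> k = 1"
  by presburger
lemma h_t2: "\<not> (b::nat) < k \<Longrightarrow> \<not> k \<le> t \<Longrightarrow> odd k \<Longrightarrow> even (Suc m) \<Longrightarrow> b = Suc m \<Longrightarrow> m = Suc (Suc t) \<Longrightarrow> k = m"
  by presburger
lemma h_t3: "(i::nat) < b \<Longrightarrow> \<not> i \<le> t \<Longrightarrow> even i \<Longrightarrow> odd (Suc m) \<Longrightarrow> b = Suc m \<Longrightarrow> m = Suc (Suc t) \<Longrightarrow> i = m"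
  by presburger
lemma h_t4: "\<not> (a::nat) < b \<Longrightarrow> even a \<Longrightarrow> odd b \<Longrightarrow> b < a"
  by presburger
lemma h_t5: "even (j::nat) \<Longrightarrow> odd k' \<Longrightarrow> j < k' \<Longrightarrow> \<not> j < k \<Longrightarrow> \<not> i < k' \<Longrightarrow> even i \<Longrightarrow> odd k \<Longrightarrow> i \<noteq> Suc k"
  by presburger
lemma h_t6: "(k::nat) = m - 1 \<Longrightarrow> even m \<Longrightarrow> m \<noteq> 0 \<Longrightarrow> odd k"
  by presburger
lemma h_t7: "(k::nat) = m - 1 \<Longrightarrow> odd m \<Longrightarrow> even k"
  by presburger

locale ew =
  fixes n :: nat and R :: "nat set" and T :: "nat \<Rightarrow> nat \<Rightarrow> bool"
  assumes fer: "ferrers n R" and tab: "T \<in> EWtab n R"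
begin

abbreviation "cc \<equiv> phiTC n R T"
abbreviation "dd m \<equiv> fst (canon_stage n R cc m)"
abbreviation "BB m \<equiv> canon_block n R cc m"
definition "PP m = {v. \<exists>t\<le>m. v \<in> BB t}"
abbreviation "bb v \<equiv> block_idx n R cc v"
abbreviation "cl \<equiv> cell n R"
abbreviation stS :: "nat \<Rightarrow> nat set" where "stS m \<equiv> (if odd m then cols n R else R - {0})"

lemma Rsub: "R \<subseteq> {0..n}" and R0: "0 \<in> R" and Rn: "n \<notin> R"
  using fer unfolding ferrers_def by auto

lemma finR: "finite R" using Rsub finite_subset by blast

lemma cellD: "cl i k \<Longrightarrow> i \<in> R \<and> k \<notin> R \<and> k \<le> n \<and> i < k"
  unfolding cell_def cols_def by auto

lemma cell_le1: "cl i k \<Longrightarrow> i \<le> n" unfolding cell_def cols_def by auto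
lemma cell_le2: "cl i k \<Longrightarrow> k \<le> n" unfolding cell_def cols_def by auto

lemma cellI: "i \<in> R \<Longrightarrow> k \<notin> R \<Longrightarrow> k \<le> n \<Longrightarrow> i < k \<Longrightarrow> cl i k"
  unfolding cell_def cols_def by auto

lemma top: "cl 0 k \<Longrightarrow> T 0 k" using tab unfolding EWtab_def by auto

lemma rowz: "i \<in> R \<Longrightarrow> i \<noteq> 0 \<Longrightarrow> \<exists>k. cl i k \<and> \<not> T i k"
  using tab unfolding EWtab_def by auto

lemma rect: "cl i j \<Longrightarrow> cl i j' \<Longrightarrow> cl i' j \<Longrightarrow> cl i' j' \<Longrightarrow> \<not> T i j \<Longrightarrow> \<not> T i' j'
   \<Longrightarrow> T i j' \<Longrightarrow> T i' j \<Longrightarrow> False"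
  using tab unfolding EWtab_def by blast

lemma adj_col: "v \<notin> R \<Longrightarrow> adjF n R u v = cl u v"
  unfolding adjF_def using cellD[of v u] by blast

lemma adj_row: "v \<in> R \<Longrightarrow> adjF n R u v = cl v u"
  unfolding adjF_def using cellD[of u v] by blast

lemma deg_col: "v \<notin> R \<Longrightarrow> degF n R v = card {i. cl i v}"
proof -
  assume v: "v \<notin> R"
  have "{u \<in> {0..n}. adjF n R u v} = {i. cl i v}"
  proof (rule set_eqI)
    fix u
    show "u \<in> {u \<in> {0..n}. adjF n R u v} \<longleftrightarrow> u \<in> {i. cl i v}"
      using adj_col[OF v, of u] cellD[of u v] by auto
  qed
  then show ?thesis unfolding degF_def by simp
qed

lemma deg_row: "v \<in> R \<Longrightarrow> degF n R v = card {k. cl v k}"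
proof -
  assume v: "v \<in> R"
  have "{u \<in> {0..n}. adjF n R u v} = {k. cl v k}"
  proof (rule set_eqI)
    fix u
    show "u \<in> {u \<in> {0..n}. adjF n R u v} \<longleftrightarrow> u \<in> {k. cl v k}"
      using adj_row[OF v, of u] cellD[of v u] by auto
  qed
  then show ?thesis unfolding degF_def by simp
qed

lemma c_lt: "v \<noteq> 0 \<Longrightarrow> v \<le> n \<Longrightarrow> cc v < degF n R v"
proof -
  assume v0: "v \<noteq> 0" and vn: "v \<le> n"
  show ?thesis
  proof (cases "v \<in> R")
    case True
    obtain k where k: "cl v k" "\<not> T v k" using rowz[OF True v0] by auto
    have "{k. cl v k \<and> T v k} \<subset> {k. cl v k}" using k by auto
    moreover have "finite {k. cl v k}" by (rule fin_le[where n=n]) (blast dest: cell_le1 cell_le2)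
    ultimately have "card {k. cl v k \<and> T v k} < card {k. cl v k}" by (rule psubset_card_mono[rotated])
    then show ?thesis using True deg_row[OF True] by (simp add: phiTC_def)
  next
    case False
    have c0: "cl 0 v" using cellI[OF R0 False vn] v0 by auto
    have "{i. cl i v \<and> \<not> T i v} \<subset> {i. cl i v}" using c0 top[OF c0] by auto
    moreover have "finite {i. cl i v}" by (rule fin_le[where n=n]) (blast dest: cell_le1 cell_le2)
    ultimately have "card {i. cl i v \<and> \<not> T i v} < card {i. cl i v}" by (rule psubset_card_mono[rotated])
    then show ?thesis using False deg_col[OF False] by (simp add: phiTC_def)
  qed
qed

lemma B0: "BB 0 = {0}" by (simp add: canon_block_def)

lemma BS: "BB (Suc m) = {v \<in> stS (Suc m). degF n R v \<le> dd m v}"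
  by (simp add: canon_block_def Let_def)

lemma dS: "dd (Suc m) v = dd m v - (if v \<in> BB (Suc m) then degF n R v else 0)
   + card {u \<in> BB (Suc m). adjF n R u v}"
  by (simp add: canon_block_def Let_def)

lemma B_sub: "BB m \<subseteq> {0..n}"
proof (cases m)
  case 0 then show ?thesis by (simp add: B0)
next
  case (Suc m') then show ?thesis using Rsub by (auto simp: BS cols_def)
qed

lemma B_par: "v \<in> BB m \<Longrightarrow> (v \<in> R \<longleftrightarrow> even m)"
proof (cases m)
  case 0 then show "v \<in> BB m \<Longrightarrow> ?thesis" using R0 by (simp add: B0)
next
  case (Suc m') then show "v \<in> BB m \<Longrightarrow> ?thesis" by (auto simp: BS cols_def split: if_splits)
qed

lemma B_ne0: "v \<in> BB (Suc m) \<Longrightarrow> v \<noteq> 0"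
  using R0 by (cases "v = 0") (auto simp: BS cols_def split: if_splits)

lemma P0: "PP 0 = {0}" unfolding PP_def by (simp add: B0)

lemma PS: "PP (Suc m) = PP m \<union> BB (Suc m)"
  unfolding PP_def by (auto simp: le_Suc_eq)

lemma P_sub: "PP m \<subseteq> {0..n}" unfolding PP_def using B_sub by blast

lemma P_mono: "m \<le> m' \<Longrightarrow> PP m \<subseteq> PP m'"
  unfolding PP_def using le_trans by blast

definition HH where "HH m \<longleftrightarrow> (\<forall>i k. cl i k \<longrightarrow> (i \<in> PP m \<and> k \<notin> PP m \<longrightarrow> T i k)
   \<and> (k \<in> PP m \<and> i \<notin> PP m \<longrightarrow> \<not> T i k))"

definition Inv where "Inv m \<longleftrightarrow> (\<forall>v. v \<noteq> 0 \<longrightarrow> dd m v + (if v \<in> PP m then degF n R v else 0)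
   = cc v + card {u \<in> PP m. adjF n R u v}) \<and> HH m"

definition cond where "cond P v \<longleftrightarrow> (if v \<in> R then (\<forall>k. cl v k \<and> \<not> T v k \<longrightarrow> k \<in> P)
   else (\<forall>i. cl i v \<and> T i v \<longrightarrow> i \<in> P))"

lemma inv0: "Inv 0"
proof -
  have a: "\<forall>v. v \<noteq> 0 \<longrightarrow> dd 0 v + (if v \<in> PP 0 then degF n R v else 0)
     = cc v + card {u \<in> PP 0. adjF n R u v}"
  proof (intro allI impI)
    fix v :: nat assume "v \<noteq> 0"
    have "{u \<in> {0::nat}. adjF n R u v} = (if adjF n R 0 v then {0} else {})" by auto
    then show "dd 0 v + (if v \<in> PP 0 then degF n R v else 0) = cc v + card {u \<in> PP 0. adjF n R u v}"
      using \<open>v \<noteq> 0\<close> by (simp add: P0)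
  qed
  have b: "HH 0" using top unfolding HH_def P0 cell_def by auto
  show ?thesis using a b unfolding Inv_def by blast
qed

lemma notPB: "Inv m \<Longrightarrow> v \<in> PP m \<Longrightarrow> v \<notin> BB (Suc m)"
proof
  assume I: "Inv m" "v \<in> PP m" "v \<in> BB (Suc m)"
  have v0: "v \<noteq> 0" using B_ne0 I(3) by auto
  have vn: "v \<le> n" using I(3) B_sub[of "Suc m"] by (meson atLeastAtMost_iff subsetD)
  have le: "degF n R v \<le> dd m v" using I(3) BS by auto
  have "dd m v + (if v \<in> PP m then degF n R v else 0) = cc v + card {u \<in> PP m. adjF n R u v}"
    using I(1) v0 unfolding Inv_def by blast
  hence eq: "dd m v + degF n R v = cc v + card {u \<in> PP m. adjF n R u v}"
    using I(2) by simp
  have "{u \<in> PP m. adjF n R u v} \<subseteq> {u \<in> {0..n}. adjF n R u v}" using P_sub[of m] by blast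
  hence "card {u \<in> PP m. adjF n R u v} \<le> degF n R v" unfolding degF_def
    by (rule card_mono[rotated]) simp
  with eq le c_lt[OF v0 vn] show False by linarith
qed

lemma B_char: assumes "Inv m"
  shows "v \<in> BB (Suc m) \<longleftrightarrow> v \<in> stS (Suc m) \<and> v \<notin> PP m \<and> cond (PP m) v"
proof (cases "v \<in> stS (Suc m) \<and> v \<notin> PP m")
  case False
  then show ?thesis using notPB[OF assms] BS by auto
next
  case True
  hence vS: "v \<in> stS (Suc m)" and vP: "v \<notin> PP m" by auto
  have v0: "v \<noteq> 0" using vS R0 by (cases "v = 0") (auto simp: cols_def split: if_splits)
  have "dd m v + (if v \<in> PP m then degF n R v else 0) = cc v + card {u \<in> PP m. adjF n R u v}"
    using assms v0 unfolding Inv_def by blast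
  hence dv: "dd m v = cc v + card {u \<in> PP m. adjF n R u v}" using vP by simp
  have H: "HH m" using assms unfolding Inv_def by auto
  have "degF n R v \<le> dd m v \<longleftrightarrow> cond (PP m) v"
  proof (cases "v \<in> R")
    case True
    let ?A0 = "{k. cl v k \<and> \<not> T v k}"
    let ?A1 = "{k. cl v k \<and> T v k}"
    let ?Q = "{k \<in> PP m. cl v k}"
    have fin0: "finite ?A0" by (rule fin_le[where n=n]) (blast dest: cell_le1 cell_le2)
    have fin1: "finite ?A1" by (rule fin_le[where n=n]) (blast dest: cell_le1 cell_le2)
    have "{k. cl v k} = ?A0 \<union> ?A1" by auto
    hence d: "degF n R v = card ?A0 + card ?A1"
      proof -
      have dj: "?A0 \<inter> ?A1 = {}" by blast
      have "degF n R v = card (?A0 \<union> ?A1)" using deg_row[OF True] \<open>_ = ?A0 \<union> ?A1\<close> by (simp only:)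
      also have "\<dots> = card ?A0 + card ?A1" by (rule card_Un_disjoint[OF fin0 fin1 dj])
      finally show ?thesis .
    qed
    have c: "cc v = card ?A1" by (simp add: phiTC_def True)
    have q: "{u \<in> PP m. adjF n R u v} = ?Q" using adj_row[OF True] by auto
    have sub: "?Q \<subseteq> ?A0" using H vP unfolding HH_def by auto
    have "degF n R v \<le> dd m v \<longleftrightarrow> card ?A0 \<le> card ?Q" unfolding d dv c q by linarith
    also have "\<dots> \<longleftrightarrow> ?A0 \<subseteq> ?Q" by (rule card_sub_iff[OF fin0 sub])
    also have "\<dots> \<longleftrightarrow> cond (PP m) v" unfolding cond_def using True by auto
    finally show ?thesis .
  next
    case False
    let ?A0 = "{i. cl i v \<and> \<not> T i v}"
    let ?A1 = "{i. cl i v \<and> T i v}"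
    let ?Q = "{i \<in> PP m. cl i v}"
    have fin0: "finite ?A0" by (rule fin_le[where n=n]) (blast dest: cell_le1 cell_le2)
    have fin1: "finite ?A1" by (rule fin_le[where n=n]) (blast dest: cell_le1 cell_le2)
    have "{i. cl i v} = ?A0 \<union> ?A1" by auto
    hence d: "degF n R v = card ?A0 + card ?A1"
      proof -
      have dj: "?A0 \<inter> ?A1 = {}" by blast
      have "degF n R v = card (?A0 \<union> ?A1)" using deg_col[OF False] \<open>_ = ?A0 \<union> ?A1\<close> by (simp only:)
      also have "\<dots> = card ?A0 + card ?A1" by (rule card_Un_disjoint[OF fin0 fin1 dj])
      finally show ?thesis .
    qed
    have c: "cc v = card ?A0" by (simp add: phiTC_def False)
    have q: "{u \<in> PP m. adjF n R u v} = ?Q" using adj_col[OF False] by auto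
    have sub: "?Q \<subseteq> ?A1" using H vP unfolding HH_def by auto
    have "degF n R v \<le> dd m v \<longleftrightarrow> card ?A1 \<le> card ?Q" unfolding d dv c q by linarith
    also have "\<dots> \<longleftrightarrow> ?A1 \<subseteq> ?Q" by (rule card_sub_iff[OF fin1 sub])
    also have "\<dots> \<longleftrightarrow> cond (PP m) v" unfolding cond_def using False by auto
    finally show ?thesis .
  qed
  then show ?thesis using BS vS vP by auto
qed

lemma inv_step: assumes I: "Inv m" shows "Inv (Suc m)"
proof -
  have disj: "PP m \<inter> BB (Suc m) = {}" using notPB[OF I] by auto
  have part1: "\<forall>v. v \<noteq> 0 \<longrightarrow> dd (Suc m) v + (if v \<in> PP (Suc m) then degF n R v else 0)
     = cc v + card {u \<in> PP (Suc m). adjF n R u v}"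
  proof (intro allI impI)
    fix v :: nat assume v0: "v \<noteq> 0"
    have e: "dd m v + (if v \<in> PP m then degF n R v else 0) = cc v + card {u \<in> PP m. adjF n R u v}"
      using I v0 unfolding Inv_def by blast
    have cu: "card {u \<in> PP (Suc m). adjF n R u v}
       = card {u \<in> PP m. adjF n R u v} + card {u \<in> BB (Suc m). adjF n R u v}"
    proof -
      have "{u \<in> PP (Suc m). adjF n R u v} = {u \<in> PP m. adjF n R u v} \<union> {u \<in> BB (Suc m). adjF n R u v}"
        by (auto simp: PS)
      moreover have "finite {u \<in> PP m. adjF n R u v}"
        by (rule fin_sub[OF P_sub])
      moreover have "finite {u \<in> BB (Suc m). adjF n R u v}"
        by (rule fin_sub[OF B_sub])
      moreover have "{u \<in> PP m. adjF n R u v} \<inter> {u \<in> BB (Suc m). adjF n R u v} = {}"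
        using disj by auto
      ultimately show ?thesis by (simp add: card_Un_disjoint)
    qed
    show "dd (Suc m) v + (if v \<in> PP (Suc m) then degF n R v else 0)
       = cc v + card {u \<in> PP (Suc m). adjF n R u v}"
    proof (cases "v \<in> BB (Suc m)")
      case True
      then have nP: "v \<notin> PP m" using disj by auto
      have le: "degF n R v \<le> dd m v" using True BS by auto
      have "dd (Suc m) v = dd m v - degF n R v + card {u \<in> BB (Suc m). adjF n R u v}"
        using True dS by simp
      moreover have "v \<in> PP (Suc m)" using True PS by auto
      ultimately show ?thesis using e cu nP le by simp
    next
      case False
      have "dd (Suc m) v = dd m v + card {u \<in> BB (Suc m). adjF n R u v}"
        using False dS by simp
      moreover have "(v \<in> PP (Suc m)) = (v \<in> PP m)" using False PS by auto
      ultimately show ?thesis using e cu by simp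
    qed
  qed
  have H: "HH m" using I unfolding Inv_def by blast
  have part2: "HH (Suc m)"
    unfolding HH_def
  proof (intro allI impI conjI)
    fix i k assume ik: "cl i k" and a: "i \<in> PP (Suc m) \<and> k \<notin> PP (Suc m)"
    have iR: "i \<in> R" using cellD[OF ik] by blast
    show "T i k"
    proof (cases "i \<in> PP m")
      case True
      moreover have "k \<notin> PP m" using a PS by blast
      ultimately show ?thesis using H ik unfolding HH_def by blast
    next
      case False
      hence "i \<in> BB (Suc m)" using a PS by blast
      hence "cond (PP m) i" using B_char[OF I] by blast
      moreover have "k \<notin> PP m" using a PS by blast
      ultimately show ?thesis using ik iR unfolding cond_def by auto
    qed
  next
    fix i k assume ik: "cl i k" and a: "k \<in> PP (Suc m) \<and> i \<notin> PP (Suc m)"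
    have kR: "k \<notin> R" using cellD[OF ik] by blast
    show "\<not> T i k"
    proof (cases "k \<in> PP m")
      case True
      moreover have "i \<notin> PP m" using a PS by blast
      ultimately show ?thesis using H ik unfolding HH_def by blast
    next
      case False
      hence "k \<in> BB (Suc m)" using a PS by blast
      hence "cond (PP m) k" using B_char[OF I] by blast
      moreover have "i \<notin> PP m" using a PS by blast
      ultimately show ?thesis using ik kR unfolding cond_def by auto
    qed
  qed
  show ?thesis using part1 part2 unfolding Inv_def by blast
qed

lemma Inv: "Inv m"
  by (induction m) (auto simp: inv0 inv_step)

lemma B_disj: "v \<in> BB m \<Longrightarrow> t < m \<Longrightarrow> v \<notin> BB t"
proof -
  assume v: "v \<in> BB m" and t: "t < m"
  then obtain m' where m: "m = Suc m'" by (cases m) auto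
  have "v \<notin> PP m'" using notPB[OF Inv] v m by blast
  moreover have "t \<le> m'" using t m by auto
  ultimately show "v \<notin> BB t" unfolding PP_def by blast
qed

lemma b_eq: "v \<in> BB m \<Longrightarrow> bb v = m"
  unfolding block_idx_def
  by (rule Least_equality) (auto dest: B_disj simp: not_less[symmetric])

lemma fin_cover: "finite A \<Longrightarrow> A \<subseteq> (\<Union>m. PP m) \<Longrightarrow> \<exists>M. A \<subseteq> PP M"
proof (induction A rule: finite_induct)
  case empty then show ?case by auto
next
  case (insert x F)
  then obtain M1 where M1: "F \<subseteq> PP M1" by auto
  obtain m where m: "x \<in> PP m" using insert.prems by auto
  have "F \<subseteq> PP (max M1 m)" using M1 P_mono[of M1 "max M1 m"] by auto
  moreover have "x \<in> PP (max M1 m)" using m P_mono[of m "max M1 m"] by auto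
  ultimately show ?case by blast
qed

lemma stuck: "finite R' \<Longrightarrow> R' \<subseteq> R \<Longrightarrow> (\<forall>k\<in>C'. \<exists>i\<in>R'. cl i k \<and> T i k)
   \<Longrightarrow> (\<forall>i\<in>R'. \<exists>k\<in>C'. cl i k \<and> \<not> T i k) \<Longrightarrow> R' = {}"
proof (induction R' arbitrary: C' rule: finite_psubset_induct)
  case (psubset R')
  show ?case
  proof (rule ccontr)
    assume ne: "R' \<noteq> {}"
    define i0 where "i0 = Min R'"
    have i0R: "i0 \<in> R'" using Min_in psubset.hyps ne i0_def by auto
    have i0min: "\<And>i. i \<in> R' \<Longrightarrow> i0 \<le> i" using Min_le psubset.hyps i0_def by auto
    have i0RR: "i0 \<in> R" using i0R psubset.prems(1) by auto
    have allc: "\<And>k. k \<in> C' \<Longrightarrow> cl i0 k"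
    proof -
      fix k assume "k \<in> C'"
      then obtain i where i: "i \<in> R'" "cl i k" using psubset.prems(2) by blast
      have "i0 \<le> i" using i0min i(1) .
      then show "cl i0 k" using cellD[OF i(2)] cellI[OF i0RR] by auto
    qed
    obtain k0 where k0: "k0 \<in> C'" "cl i0 k0" "\<not> T i0 k0" using psubset.prems(3) i0R by blast
    define Bs where "Bs = {k \<in> C'. \<not> T i0 k}"
    define R2 where "R2 = {i \<in> R'. \<exists>k\<in>Bs. cl i k \<and> T i k}"
    have sub: "R2 \<subset> R'" using i0R unfolding R2_def Bs_def by auto
    have h1: "\<forall>k\<in>Bs. \<exists>i\<in>R2. cl i k \<and> T i k"
      using psubset.prems(2) unfolding R2_def Bs_def by blast
    have h2: "\<forall>i\<in>R2. \<exists>k\<in>Bs. cl i k \<and> \<not> T i k"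
    proof
      fix i assume "i \<in> R2"
      then obtain k where k: "k \<in> Bs" "cl i k" "T i k" and iR: "i \<in> R'" unfolding R2_def by auto
      obtain k' where k': "k' \<in> C'" "cl i k'" "\<not> T i k'" using psubset.prems(3) iR by blast
      have "\<not> T i0 k'"
      proof
        assume "T i0 k'"
        then show False using rect[of i0 k k' i] allc k k' unfolding Bs_def by auto
      qed
      then show "\<exists>k\<in>Bs. cl i k \<and> \<not> T i k" using k' unfolding Bs_def by auto
    qed
    have "R2 \<subseteq> R" using sub psubset.prems(1) by auto
    hence "R2 = {}" using psubset.IH[OF sub] h1 h2 by blast
    moreover have "k0 \<in> Bs" using k0 unfolding Bs_def by auto
    ultimately show False using h1 by auto
  qed
qed

lemma cover: "v \<le> n \<Longrightarrow> \<exists>m. v \<in> BB m"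
proof -
  assume vn: "v \<le> n"
  let ?U = "\<Union>m. PP m"
  have "?U \<subseteq> {0..n}" using P_sub by auto
  hence "finite ?U" using finite_subset by blast
  then obtain M where M: "?U \<subseteq> PP M" using fin_cover[of ?U] by blast
  hence stab: "\<And>m. PP m \<subseteq> PP M" by auto
  define R' where "R' = R - PP M"
  define C' where "C' = cols n R - PP M"
  have I: "\<And>m. Inv m" by (rule Inv)
  have hC: "\<forall>k\<in>C'. \<exists>i\<in>R'. cl i k \<and> T i k"
  proof
    fix k assume k: "k \<in> C'"
    let ?s = "2*M"
    have kS: "k \<in> stS (Suc ?s)" using k unfolding C'_def by auto
    have "k \<notin> BB (Suc ?s)" using k stab[of "Suc ?s"] unfolding C'_def PS by auto
    moreover have "k \<notin> PP ?s" using k stab[of ?s] unfolding C'_def by auto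
    ultimately have "\<not> cond (PP ?s) k" using B_char[OF I[of ?s], of k] kS by blast
    moreover have "k \<notin> R" using k unfolding C'_def cols_def by auto
    ultimately obtain i where i: "cl i k" "T i k" "i \<notin> PP ?s" unfolding cond_def by auto
    moreover have "PP M \<subseteq> PP ?s" by (rule P_mono) auto
    ultimately show "\<exists>i\<in>R'. cl i k \<and> T i k" using cellD unfolding R'_def by blast
  qed
  have hR: "\<forall>i\<in>R'. \<exists>k\<in>C'. cl i k \<and> \<not> T i k"
  proof
    fix i assume i: "i \<in> R'"
    let ?s = "Suc (2*M)"
    have "0 \<in> PP M" using stab[of 0] P0 by auto
    hence "i \<noteq> 0" using i unfolding R'_def by (cases "i = 0") auto
    hence iS: "i \<in> stS (Suc ?s)" using i unfolding R'_def by auto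
    have "i \<notin> BB (Suc ?s)" using i stab[of "Suc ?s"] unfolding R'_def PS by auto
    moreover have "i \<notin> PP ?s" using i stab[of ?s] unfolding R'_def by auto
    ultimately have "\<not> cond (PP ?s) i" using B_char[OF I[of ?s], of i] iS by blast
    moreover have "i \<in> R" using i unfolding R'_def by auto
    ultimately obtain k where k: "cl i k" "\<not> T i k" "k \<notin> PP ?s" unfolding cond_def by auto
    moreover have "PP M \<subseteq> PP ?s" by (rule P_mono) auto
    moreover have "k \<in> cols n R" using k(1) unfolding cell_def by auto
    ultimately show "\<exists>k\<in>C'. cl i k \<and> \<not> T i k" unfolding C'_def by blast
  qed
  have "R' = {}" using stuck[of R' C'] hC hR finR unfolding R'_def by auto
  hence "C' = {}" using hC by auto
  hence "v \<in> PP M" using vn \<open>R' = {}\<close> unfolding R'_def C'_def cols_def by auto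
  then show ?thesis unfolding PP_def by auto
qed

lemma b_in: "v \<le> n \<Longrightarrow> v \<in> BB (bb v)"
  unfolding block_idx_def by (rule LeastI_ex) (rule cover)

lemma P_iff: "v \<le> n \<Longrightarrow> v \<in> PP m \<longleftrightarrow> bb v \<le> m"
proof
  assume "v \<le> n" "v \<in> PP m"
  then obtain t where "t \<le> m" "v \<in> BB t" unfolding PP_def by auto
  then show "bb v \<le> m" using b_eq by auto
next
  assume "v \<le> n" "bb v \<le> m"
  then show "v \<in> PP m" using b_in unfolding PP_def by auto
qed

lemma b_par: "v \<le> n \<Longrightarrow> v \<in> R \<longleftrightarrow> even (bb v)"
  using B_par b_in by blast

lemma T_iff: assumes ik: "cl i k" shows "T i k \<longleftrightarrow> bb i < bb k"
proof -
  have i: "i \<le> n" "i \<in> R" and k: "k \<le> n" "k \<notin> R" using cellD[OF ik] by auto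
  have "even (bb i)" using b_par[OF i(1)] i(2) by simp
  moreover have "odd (bb k)" using b_par[OF k(1)] k(2) by simp
  ultimately have ne: "bb i \<noteq> bb k" by auto
  have H: "\<And>m. HH m" using Inv unfolding Inv_def by blast
  show ?thesis
  proof (cases "bb i < bb k")
    case True
    have "i \<in> PP (bb i)" "k \<notin> PP (bb i)" using P_iff i k True by auto
    then show ?thesis using H[of "bb i"] ik True unfolding HH_def by auto
  next
    case False
    hence lt: "bb k < bb i" using ne by auto
    have "k \<in> PP (bb k)" "i \<notin> PP (bb k)" using P_iff i k lt by auto
    then show ?thesis using H[of "bb k"] ik False unfolding HH_def by auto
  qed
qed

lemma b0: "bb 0 = 0" using b_eq[of 0 0] B0 by simp

lemma b_pos: "v \<le> n \<Longrightarrow> v \<noteq> 0 \<Longrightarrow> bb v \<noteq> 0"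
proof
  assume "v \<le> n" "v \<noteq> 0" "bb v = 0"
  then show False using b_in[of v] B0 by simp
qed


lemma pred: assumes vn: "v \<le> n" and bv: "bb v = Suc m'"
  shows "\<exists>u. bb u = m' \<and> (if v \<in> R then cl v u \<and> \<not> T v u else cl u v \<and> T u v)"
proof -
  have vB: "v \<in> BB (Suc m')" using b_in[OF vn] bv by simp
  have pv: "v \<in> R \<longleftrightarrow> even (Suc m')" using b_par[OF vn] bv by simp
  have v0: "v \<noteq> 0" using b0 bv by (cases "v = 0") auto
  consider (one) "m' = 0" | (two) "m' = 1" | (more) t where "m' = Suc (Suc t)"
    by (metis One_nat_def not0_implies_Suc)
  then show ?thesis
  proof cases
    case one
    hence vR: "v \<notin> R" using pv by simp
    have "cl 0 v" using cellI[OF R0 vR vn] v0 by simp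
    then show ?thesis using top one vR b0 by auto
  next
    case two
    hence vR: "v \<in> R" using pv by simp
    obtain k where k: "cl v k" "\<not> T v k" using rowz[OF vR v0] by blast
    have kn: "k \<le> n" and kR: "k \<notin> R" using cellD[OF k(1)] by auto
    have "\<not> bb v < bb k" using T_iff[OF k(1)] k(2) by simp
    moreover have "odd (bb k)" using b_par[OF kn] kR by simp
    ultimately have "bb k = 1" using bv two h_two[of "bb v" "bb k"] by simp
    then show ?thesis using vR k two by auto
  next
    case more
    have vS: "v \<in> stS (Suc t)" using pv more v0 vn by (auto simp: cols_def)
    have "v \<notin> BB (Suc t)" using B_disj[OF vB] more by simp
    moreover have "v \<notin> PP t" using P_iff[OF vn] bv more by simp
    ultimately have nc: "\<not> cond (PP t) v" using B_char[OF Inv[of t], of v] vS by blast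
    show ?thesis
    proof (cases "v \<in> R")
      case True
      obtain k where k: "cl v k" "\<not> T v k" "k \<notin> PP t" using nc True unfolding cond_def by auto
      have kn: "k \<le> n" and kR: "k \<notin> R" using cellD[OF k(1)] by auto
      have "\<not> bb v < bb k" using T_iff[OF k(1)] k(2) by simp
      moreover have "\<not> bb k \<le> t" using P_iff[OF kn] k(3) by simp
      moreover have "odd (bb k)" using b_par[OF kn] kR by simp
      moreover have "even (Suc m')" using pv True by simp
      ultimately have "bb k = m'" using bv more h_t2[of "bb v" "bb k" t m'] by blast
      then show ?thesis using True k by auto
    next
      case False
      obtain i where i: "cl i v" "T i v" "i \<notin> PP t" using nc False unfolding cond_def by auto
      have iN: "i \<le> n" and iR: "i \<in> R" using cellD[OF i(1)] by auto
      have "bb i < bb v" using T_iff[OF i(1)] i(2) by simp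
      moreover have "\<not> bb i \<le> t" using P_iff[OF iN] i(3) by simp
      moreover have "even (bb i)" using b_par[OF iN] iR by simp
      moreover have "odd (Suc m')" using pv False by simp
      ultimately have "bb i = m'" using bv more h_t3[of "bb i" "bb v" t m'] by blast
      then show ?thesis using False i by auto
    qed
  qed
qed

lemma cs: assumes ik: "cl i k"
  shows "cornersupport n R T i k \<longleftrightarrow> (if bb i < bb k then bb k \<noteq> Suc (bb i) else bb i \<noteq> Suc (bb k))"
proof -
  have iN: "i \<le> n" and iR: "i \<in> R" and kN: "k \<le> n" and kR: "k \<notin> R" using cellD[OF ik] by auto
  have pi: "even (bb i)" using b_par[OF iN] iR by simp
  have pk: "odd (bb k)" using b_par[OF kN] kR by simp
  have rowp: "\<And>j. j \<in> R \<Longrightarrow> even (bb j)" using b_par Rsub by auto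
  have colp: "\<And>j. j \<in> cols n R \<Longrightarrow> odd (bb j)" using b_par unfolding cols_def by auto
  have tk: "T i k = (bb i < bb k)" by (rule T_iff[OF ik])
  have csd: "cornersupport n R T i k \<longleftrightarrow> (\<exists>j'\<in>R. \<exists>k'\<in>cols n R. j' \<noteq> i \<and> k' \<noteq> k \<and>
     (bb j' < bb k') \<noteq> (bb i < bb k) \<and> (bb j' < bb k) = (bb i < bb k) \<and> (bb i < bb k') = (bb i < bb k))"
    unfolding cornersupport_def suppl_def Let_def tk by simp
  show ?thesis
  proof (cases "bb i < bb k")
    case True
    have "(\<exists>j'\<in>R. \<exists>k'\<in>cols n R. j' \<noteq> i \<and> k' \<noteq> k \<and>
     (bb j' < bb k') \<noteq> True \<and> (bb j' < bb k) = True \<and> (bb i < bb k') = True) \<longleftrightarrow> bb k \<noteq> Suc (bb i)"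
    proof
      assume "\<exists>j'\<in>R. \<exists>k'\<in>cols n R. j' \<noteq> i \<and> k' \<noteq> k \<and>
        (bb j' < bb k') \<noteq> True \<and> (bb j' < bb k) = True \<and> (bb i < bb k') = True"
      then show "bb k \<noteq> Suc (bb i)" by auto
    next
      assume ne: "bb k \<noteq> Suc (bb i)"
      have ge: "bb k \<ge> bb i + 3" using ne True pi pk par_gap[of "bb i" "bb k"] by simp
      have e1: "bb k = Suc (bb k - 1)" using ge by simp
      obtain j' where j': "bb j' = bb k - 1" "cl j' k" "T j' k"
        using pred[OF kN e1] kR by auto
      have j'N: "j' \<le> n" and j'R: "j' \<in> R" using cellD[OF j'(2)] by auto
      have e2: "bb j' = Suc (bb k - 2)" using ge j'(1) by simp
      obtain k' where k': "bb k' = bb k - 2" "cl j' k'" "\<not> T j' k'"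
        using pred[OF j'N e2] j'R by auto
      have k'C: "k' \<in> cols n R" using k'(2) unfolding cell_def by auto
      have "j' \<noteq> i" using j'(1) ge by auto
      moreover have "k' \<noteq> k" using k'(1) ge by auto
      ultimately show "\<exists>j'\<in>R. \<exists>k'\<in>cols n R. j' \<noteq> i \<and> k' \<noteq> k \<and>
        (bb j' < bb k') \<noteq> True \<and> (bb j' < bb k) = True \<and> (bb i < bb k') = True"
        using j'R k'C j'(1) k'(1) ge by (intro bexI[of _ j'] bexI[of _ k']) auto
    qed
    then show ?thesis using csd True by simp
  next
    case False
    have lt: "bb k < bb i" using False pi pk h_t4[of "bb i" "bb k"] by simp
    have "(\<exists>j'\<in>R. \<exists>k'\<in>cols n R. j' \<noteq> i \<and> k' \<noteq> k \<and>
     (bb j' < bb k') \<noteq> False \<and> (bb j' < bb k) = False \<and> (bb i < bb k') = False) \<longleftrightarrow> bb i \<noteq> Suc (bb k)"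
    proof
      assume "\<exists>j'\<in>R. \<exists>k'\<in>cols n R. j' \<noteq> i \<and> k' \<noteq> k \<and>
        (bb j' < bb k') \<noteq> False \<and> (bb j' < bb k) = False \<and> (bb i < bb k') = False"
      then obtain j' k' where jk: "j' \<in> R" "k' \<in> cols n R" "bb j' < bb k'" "\<not> bb j' < bb k" "\<not> bb i < bb k'"
        by auto
      have "even (bb j')" "odd (bb k')" using rowp colp jk by auto
      then show "bb i \<noteq> Suc (bb k)" using jk(3,4,5) pi pk h_t5[of "bb j'" "bb k'" "bb k" "bb i"] by blast
    next
      assume ne: "bb i \<noteq> Suc (bb k)"
      have ge: "bb i \<ge> bb k + 3" using ne lt pi pk par_gap[of "bb k" "bb i"] by simp
      have e1: "bb i = Suc (bb i - 1)" using ge by simp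
      obtain k' where k': "bb k' = bb i - 1" "cl i k'" "\<not> T i k'"
        using pred[OF iN e1] iR by auto
      have k'N: "k' \<le> n" and k'R: "k' \<notin> R" using cellD[OF k'(2)] by auto
      have e2: "bb k' = Suc (bb i - 2)" using ge k'(1) by simp
      obtain j' where j': "bb j' = bb i - 2" "cl j' k'" "T j' k'"
        using pred[OF k'N e2] k'R by auto
      have j'R: "j' \<in> R" using cellD[OF j'(2)] by auto
      have k'C: "k' \<in> cols n R" using k'(2) unfolding cell_def by auto
      have "j' \<noteq> i" using j'(1) ge by auto
      moreover have "k' \<noteq> k" using k'(1) ge by auto
      ultimately show "\<exists>j'\<in>R. \<exists>k'\<in>cols n R. j' \<noteq> i \<and> k' \<noteq> k \<and>
        (bb j' < bb k') \<noteq> False \<and> (bb j' < bb k) = False \<and> (bb i < bb k') = False"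
        using j'R k'C j'(1) k'(1) ge by (intro bexI[of _ j'] bexI[of _ k']) auto
    qed
    then show ?thesis using csd False by simp
  qed
qed

lemma main: assumes j: "j \<in> {1..n}" shows "nu n R T j = mu n R cc j"
proof -
  have jn: "j \<le> n" and j0: "j \<noteq> 0" using j by auto
  define m where "m = bb j"
  have m0: "m \<noteq> 0" using b_pos[OF jn j0] m_def by simp
  have Bm: "\<And>k. k \<in> BB (m - 1) \<longleftrightarrow> k \<le> n \<and> bb k = m - 1"
  proof
    fix k assume "k \<in> BB (m - 1)"
    then show "k \<le> n \<and> bb k = m - 1" using b_eq B_sub[of "m - 1"] by auto
  next
    fix k assume "k \<le> n \<and> bb k = m - 1"
    then show "k \<in> BB (m - 1)" using b_in by metis
  qed
  show ?thesis
  proof (cases "j \<in> R")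
    case True
    have ev: "even m" using b_par[OF jn] True m_def by simp
    have "{k. cl j k \<and> \<not> T j k \<and> \<not> cornersupport n R T j k} = {k \<in> BB (m - 1). k > j}"
    proof (rule set_eqI)
      fix k
      show "k \<in> {k. cl j k \<and> \<not> T j k \<and> \<not> cornersupport n R T j k} \<longleftrightarrow> k \<in> {k \<in> BB (m - 1). k > j}"
      proof
        assume "k \<in> {k. cl j k \<and> \<not> T j k \<and> \<not> cornersupport n R T j k}"
        hence k: "cl j k" "\<not> T j k" "\<not> cornersupport n R T j k" by auto
        have "\<not> bb j < bb k" using T_iff[OF k(1)] k(2) by simp
        hence "bb j = Suc (bb k)" using cs[OF k(1)] k(3) by simp
        then show "k \<in> {k \<in> BB (m - 1). k > j}" using Bm cellD[OF k(1)] m_def by auto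
      next
        assume "k \<in> {k \<in> BB (m - 1). k > j}"
        hence k: "k \<le> n" "bb k = m - 1" "k > j" using Bm by auto
        have "odd (bb k)" using k(2) ev m0 h_t6 by blast
        hence "k \<notin> R" using b_par[OF k(1)] by simp
        hence ck: "cl j k" using cellI[OF True _ k(1) k(3)] by simp
        have "\<not> bb j < bb k" using k(2) m_def by simp
        moreover have "bb j = Suc (bb k)" using k(2) m_def m0 by simp
        ultimately show "k \<in> {k. cl j k \<and> \<not> T j k \<and> \<not> cornersupport n R T j k}"
          using ck T_iff[OF ck] cs[OF ck] by simp
      qed
    qed
    then show ?thesis unfolding nu_def mu_def Let_def using True ev m_def by simp
  next
    case False
    have od: "odd m" using b_par[OF jn] False m_def by simp
    have "{i. cl i j \<and> T i j \<and> \<not> cornersupport n R T i j} = {k \<in> BB (m - 1). k < j}"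
    proof (rule set_eqI)
      fix i
      show "i \<in> {i. cl i j \<and> T i j \<and> \<not> cornersupport n R T i j} \<longleftrightarrow> i \<in> {k \<in> BB (m - 1). k < j}"
      proof
        assume "i \<in> {i. cl i j \<and> T i j \<and> \<not> cornersupport n R T i j}"
        hence i: "cl i j" "T i j" "\<not> cornersupport n R T i j" by auto
        have "bb i < bb j" using T_iff[OF i(1)] i(2) by simp
        hence "bb j = Suc (bb i)" using cs[OF i(1)] i(3) by simp
        then show "i \<in> {k \<in> BB (m - 1). k < j}" using Bm cellD[OF i(1)] m_def by auto
      next
        assume "i \<in> {k \<in> BB (m - 1). k < j}"
        hence i: "i \<le> n" "bb i = m - 1" "i < j" using Bm by auto
        have "even (bb i)" using i(2) od h_t7 by blast
        hence "i \<in> R" using b_par[OF i(1)] by simp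
        hence ci: "cl i j" using cellI[OF _ False jn i(3)] by simp
        have "bb i < bb j" using i(2) m_def m0 by simp
        moreover have "bb j = Suc (bb i)" using i(2) m_def m0 by simp
        ultimately show "i \<in> {i. cl i j \<and> T i j \<and> \<not> cornersupport n R T i j}"
          using ci T_iff[OF ci] cs[OF ci] by simp
      qed
    qed
    then show ?thesis unfolding nu_def mu_def Let_def using False od m_def by simp
  qed
qed

end

theorem lemma4p11:
  assumes "ferrers n R"
    and "T \<in> EWtab n R"
    and "j \<in> {1..n}"
  shows "nu n R T j = mu n R (phiTC n R T) j"
proof -
  interpret ew n R T using assms(1,2) by unfold_locales
  show ?thesis using main[OF assms(3)] .
qed

end
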